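(* Let $T$ be a quasi-binary tree with $|V(T)|>1$ and vertex weight function $\omega:V(T)\to\mathbb{R}$. Let $\gamma\in\mathbb{R}$ with $\gamma\ge\omega_3$. If $$\omega(T)\ge\max\left\{\frac{3\omega_1-\gamma}{2},\ 3\omega_2-2\gamma\right\},$$ then $$\beta_2(T)\ge\frac{\omega(T)-\gamma}{3}\quad\text{and}\quad \alpha_2(T)\le\frac{2\omega(T)+\gamma}{3}.$$
   Context: A binary tree is a tree in which every vertex has degree $3$, except for pending vertices (degree $1$) and one root vertex (degree $2$). A tree is quasi-binary if it is a connected subgraph of a binary tree; in particular every vertex has degree $1$, $2$ or $3$. For a subgraph $H$ write $\omega(H)=\sum_{v\in V(H)}\omega(v)$. For $i=1,2,3$ let $V_i$ be the set of vertices of degree $i$, and let $\omega_i=\max\{\omega(v): v\in V_j \text{ for some } j \text{ with } i\le j\le 3\}$ (the maximum weight of a vertex of degree at least $i$). For an edge $e$, let $C^1_e, C^2_e$ be the two components of $T\setminus\{e\}$. Define $\alpha_2(T)=\min_{e\in E(T)}\max\{\omega(C^1_e),\omega(C^2_e)\}$ and $\beta_2(T)=\max_{e\in E(T)}\min\{\omega(C^1_e),\omega(C^2_e)\}$. *)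

theory Defs
  imports Complex_Main
begin

definition graph :: "'a set \<Rightarrow> 'a set set \<Rightarrow> bool" where
  "graph V E \<longleftrightarrow> finite V \<and> (\<forall>e\<in>E. e \<subseteq> V \<and> card e = 2)"

definition adjrel :: "'a set set \<Rightarrow> ('a \<times> 'a) set" where
  "adjrel E = {(x, y). {x, y} \<in> E}"

definition connected_graph :: "'a set \<Rightarrow> 'a set set \<Rightarrow> bool" where
  "connected_graph V E \<longleftrightarrow> (\<forall>u\<in>V. \<forall>v\<in>V. (u, v) \<in> (adjrel E)\<^sup>*)"

definition is_tree :: "'a set \<Rightarrow> 'a set set \<Rightarrow> bool" where
  "is_tree V E \<longleftrightarrow> graph V E \<and> V \<noteq> {} \<and> connected_graph V E \<and> card E = card V - 1"

definition deg :: "'a set set \<Rightarrow> 'a \<Rightarrow> nat" where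
  "deg E v = card {u. {u, v} \<in> E}"

definition binary_tree :: "nat set \<Rightarrow> nat set set \<Rightarrow> bool" where
  "binary_tree B F \<longleftrightarrow> is_tree B F \<and>
     (\<exists>r\<in>B. deg F r = 2 \<and> (\<forall>v\<in>B. v \<noteq> r \<longrightarrow> deg F v = 1 \<or> deg F v = 3))"

definition quasi_binary :: "'a set \<Rightarrow> 'a set set \<Rightarrow> bool" where
  "quasi_binary V E \<longleftrightarrow> is_tree V E \<and>
     (\<exists>B F (f :: 'a \<Rightarrow> nat). binary_tree B F \<and> inj_on f V \<and> f ` V \<subseteq> B \<and>
        (\<forall>u\<in>V. \<forall>v\<in>V. {u, v} \<in> E \<longrightarrow> {f u, f v} \<in> F))"

definition comp :: "'a set \<Rightarrow> 'a set set \<Rightarrow> 'a \<Rightarrow> 'a set" where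
  "comp V E' x = {y \<in> V. (x, y) \<in> (adjrel E')\<^sup>*}"

definition wt :: "('a \<Rightarrow> real) \<Rightarrow> 'a set \<Rightarrow> real" where
  "wt \<omega> H = (\<Sum>v\<in>H. \<omega> v)"

text \<open>For an edge e = {u,v}, the two components of T - e are comp(u) and comp(v).\<close>
definition alpha2 :: "'a set \<Rightarrow> 'a set set \<Rightarrow> ('a \<Rightarrow> real) \<Rightarrow> real" where
  "alpha2 V E \<omega> = Min ((\<lambda>e. Max ((\<lambda>x. wt \<omega> (comp V (E - {e}) x)) ` e)) ` E)"

definition beta2 :: "'a set \<Rightarrow> 'a set set \<Rightarrow> ('a \<Rightarrow> real) \<Rightarrow> real" where
  "beta2 V E \<omega> = Max ((\<lambda>e. Min ((\<lambda>x. wt \<omega> (comp V (E - {e}) x)) ` e)) ` E)"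

end

theory Submission
  imports Defs
begin

lemma adj_iff[simp]: "(x,y) \<in> adjrel E \<longleftrightarrow> {x,y} \<in> E"
  by (simp add: adjrel_def)

lemma rt_sym: "(x,y) \<in> (adjrel E)\<^sup>* \<Longrightarrow> (y,x) \<in> (adjrel E)\<^sup>*"
proof -
  have "sym (adjrel E)" unfolding adjrel_def sym_def by (auto simp: insert_commute)
  then have "sym ((adjrel E)\<^sup>*)" by (rule sym_rtrancl)
  then show "(x,y) \<in> (adjrel E)\<^sup>* \<Longrightarrow> (y,x) \<in> (adjrel E)\<^sup>*" by (meson symD)
qed

lemma graph_finE: "graph V E \<Longrightarrow> finite E"
proof -
  assume g: "graph V E"
  then have "E \<subseteq> Pow V" "finite V" unfolding graph_def by auto
  then show "finite E" by (meson finite_Pow_iff finite_subset)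
qed

lemma edge_ne: assumes "graph V E" "{x,y} \<in> E" shows "x \<noteq> y" "x \<in> V" "y \<in> V"
proof -
  have "card {x,y} = 2" "{x,y} \<subseteq> V" using assms unfolding graph_def by auto
  then show "x \<noteq> y" "x \<in> V" "y \<in> V" by (auto split: if_splits)
qed

lemma conn_count:
  assumes g: "graph V E" and r: "r \<in> V" and c: "\<forall>v\<in>V. (v,r) \<in> (adjrel E)\<^sup>*"
  shows "card V \<le> card E + 1"
proof -
  let ?R = "adjrel E"
  define d where "d v = (LEAST n. (v,r) \<in> ?R ^^ n)" for v
  have dI: "(v, r) \<in> ?R ^^ d v" if "v \<in> V" for v
  proof -
    from c that have "\<exists>n. (v,r) \<in> ?R ^^ n" using rtrancl_power by blast
    then show ?thesis unfolding d_def by (rule LeastI_ex)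
  qed
  have dle: "d v \<le> n" if "(v,r) \<in> ?R ^^ n" for v n
    unfolding d_def using that by (rule Least_le)
  have par: "\<exists>y. {v,y} \<in> E \<and> Suc (d y) = d v" if "v \<in> V" "v \<noteq> r" for v
  proof -
    have "d v \<noteq> 0"
    proof
      assume "d v = 0"
      with dI[OF that(1)] have "v = r" by simp
      with that(2) show False by simp
    qed
    then obtain m where m: "d v = Suc m" by (cases "d v") auto
    with dI[OF that(1)] obtain y where y1: "(v,y) \<in> ?R" and y2: "(y,r) \<in> ?R ^^ m"
      using relpow_Suc_D2 by metis
    have yV: "y \<in> V" using edge_ne[OF g] y1 by simp
    have "d y \<le> m" using dle[OF y2] .
    moreover have "(v,r) \<in> ?R ^^ Suc (d y)" using y1 dI[OF yV] by (rule relpow_Suc_I2)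
    hence "d v \<le> Suc (d y)" by (rule dle)
    ultimately show ?thesis using y1 m by auto
  qed
  define p where "p v = (SOME y. {v,y} \<in> E \<and> Suc (d y) = d v)" for v
  have p: "{v, p v} \<in> E \<and> Suc (d (p v)) = d v" if "v \<in> V" "v \<noteq> r" for v
    unfolding p_def using someI_ex[OF par[OF that]] .
  have inj: "inj_on (\<lambda>v. {v, p v}) (V - {r})"
  proof (rule inj_onI)
    fix v w assume v: "v \<in> V - {r}" and w: "w \<in> V - {r}" and eq: "{v, p v} = {w, p w}"
    show "v = w"
    proof (rule ccontr)
      assume "v \<noteq> w"
      then have vw: "v = p w" "w = p v" using eq by (auto simp: doubleton_eq_iff)
      have pv: "Suc (d (p v)) = d v" using p[of v] v by blast
      have pw: "Suc (d (p w)) = d w" using p[of w] w by blast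
      have "Suc (d w) = d v" using pv vw(2) by metis
      moreover have "Suc (d v) = d w" using pw vw(1) by metis
      ultimately show False by linarith
    qed
  qed
  have "(\<lambda>v. {v, p v}) ` (V - {r}) \<subseteq> E" using p by auto
  then have "card (V - {r}) \<le> card E" using card_inj_on_le[OF inj] graph_finE[OF g] by blast
  moreover have "finite V" using g unfolding graph_def by simp
  ultimately show ?thesis using r by simp
qed

lemma tree_basic:
  assumes "is_tree V E"
  shows "graph V E" "finite V" "finite E" "card E = card V - 1" "V \<noteq> {}"
    "\<forall>u\<in>V. \<forall>v\<in>V. (u, v) \<in> (adjrel E)\<^sup>*"
  using assms graph_finE unfolding is_tree_def graph_def connected_graph_def by auto

lemma sep:
  assumes t: "is_tree V E" and e: "{u,v} \<in> E"
  shows "(u,v) \<notin> (adjrel (E - {{u,v}}))\<^sup>*"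
proof
  let ?E' = "E - {{u,v}}"
  assume uv: "(u,v) \<in> (adjrel ?E')\<^sup>*"
  have vu: "(v,u) \<in> (adjrel ?E')\<^sup>*" using rt_sym[OF uv] .
  have lift: "(x,y) \<in> (adjrel ?E')\<^sup>*" if "(x,y) \<in> (adjrel E)\<^sup>*" for x y
    using that
  proof (induction rule: rtrancl_induct)
    case base show ?case by simp
  next
    case (step y z)
    show ?case
    proof (cases "{y,z} = {u,v}")
      case True
      then have "(y,z) \<in> (adjrel ?E')\<^sup>*" using uv vu by (auto simp: doubleton_eq_iff)
      then show ?thesis using step.IH by (meson rtrancl_trans)
    next
      case False
      then have "(y,z) \<in> adjrel ?E'" using step.hyps(2) by simp
      then show ?thesis using step.IH by (meson rtrancl_into_rtrancl)
    qed
  qed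
  note tb = tree_basic[OF t]
  have uV: "u \<in> V" using edge_ne[OF tb(1) e] by simp
  have c1: "\<forall>x\<in>V. (x,u) \<in> (adjrel ?E')\<^sup>*" using tb(6) lift uV by blast
  have g1: "graph V ?E'" using tb(1) unfolding graph_def by blast
  have "card V \<le> card ?E' + 1" by (rule conn_count[OF g1 uV c1])
  moreover have "card ?E' = card E - 1" using e tb(3) by simp
  moreover have "card E > 0" using e tb(3) card_gt_0_iff by blast
  moreover have "card V > 0" using tb(2,5) card_gt_0_iff by blast
  ultimately show False using tb(4) by arith
qed

lemma split:
  assumes t: "is_tree V E" and e: "{u,v} \<in> E"
  shows "comp V (E-{{u,v}}) u \<union> comp V (E-{{u,v}}) v = V"
    and "comp V (E-{{u,v}}) u \<inter> comp V (E-{{u,v}}) v = {}"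
proof -
  let ?E' = "E - {{u,v}}"
  note tb = tree_basic[OF t]
  have uV: "u \<in> V" using edge_ne[OF tb(1) e] by simp
  have cl: "(u,y) \<in> (adjrel ?E')\<^sup>* \<or> (v,y) \<in> (adjrel ?E')\<^sup>*" if "(u,y) \<in> (adjrel E)\<^sup>*" for y
    using that
  proof (induction rule: rtrancl_induct)
    case base show ?case by simp
  next
    case (step y z)
    show ?case
    proof (cases "{y,z} = {u,v}")
      case True
      then have "z = u \<or> z = v" by (auto simp: doubleton_eq_iff)
      then show ?thesis by auto
    next
      case False
      then have "(y,z) \<in> adjrel ?E'" using step.hyps(2) by simp
      then show ?thesis using step.IH by (meson rtrancl_into_rtrancl)
    qed
  qed
  show "comp V ?E' u \<union> comp V ?E' v = V"
    using cl tb(6) uV unfolding comp_def by blast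
  show "comp V ?E' u \<inter> comp V ?E' v = {}"
  proof (rule ccontr)
    assume "comp V ?E' u \<inter> comp V ?E' v \<noteq> {}"
    then obtain y where "(u,y) \<in> (adjrel ?E')\<^sup>*" "(v,y) \<in> (adjrel ?E')\<^sup>*"
      unfolding comp_def by blast
    then have "(u,v) \<in> (adjrel ?E')\<^sup>*" using rt_sym by (meson rtrancl_trans)
    with sep[OF t e] show False by simp
  qed
qed

lemma star_cover:
  assumes t: "is_tree V E" and v: "v \<in> V" and y: "y \<in> V" "y \<noteq> v"
  shows "\<exists>u. {u,v}\<in>E \<and> y \<in> comp V (E-{{u,v}}) u"
proof -
  note tb = tree_basic[OF t]
  have "y = v \<or> (\<exists>u. {u,v} \<in> E \<and> (u,y) \<in> (adjrel (E-{{u,v}}))\<^sup>*)"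
    if "(v,y) \<in> (adjrel E)\<^sup>*" for y
    using that
  proof (induction rule: rtrancl_induct)
    case base show ?case by simp
  next
    case (step y z)
    show ?case
    proof (cases "y = v")
      case True
      then have "{z,v} \<in> E" using step.hyps(2) by (simp add: insert_commute)
      then show ?thesis by blast
    next
      case False
      with step.IH obtain u where u: "{u,v} \<in> E" "(u,y) \<in> (adjrel (E-{{u,v}}))\<^sup>*" by blast
      show ?thesis
      proof (cases "{y,z} = {u,v}")
        case True
        with False have "z = v" by (auto simp: doubleton_eq_iff)
        then show ?thesis by simp
      next
        case F2: False
        then have "(y,z) \<in> adjrel (E-{{u,v}})" using step.hyps(2) by simp
        then show ?thesis using u by (meson rtrancl_into_rtrancl)
      qed
    qed
  qed
  then show ?thesis using tb(6) v y unfolding comp_def by blast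
qed

lemma star_disj:
  assumes t: "is_tree V E" and e1: "{u1,v}\<in>E" and e2: "{u2,v}\<in>E" and ne: "u1\<noteq>u2"
  shows "comp V (E-{{u1,v}}) u1 \<inter> comp V (E-{{u2,v}}) u2 = {}"
proof (rule ccontr)
  note tb = tree_basic[OF t]
  assume "comp V (E-{{u1,v}}) u1 \<inter> comp V (E-{{u2,v}}) u2 \<noteq> {}"
  then obtain y where y1: "(u1,y) \<in> (adjrel (E-{{u1,v}}))\<^sup>*"
    and y2: "(u2,y) \<in> (adjrel (E-{{u2,v}}))\<^sup>*" unfolding comp_def by blast
  have u2v: "u2 \<noteq> v" using edge_ne[OF tb(1) e2] by simp
  have cl: "(v,y) \<in> (adjrel (E-{{u1,v}}))\<^sup>* \<or> (u2,v) \<in> (adjrel (E-{{u2,v}}))\<^sup>*"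
    if "(u2,y) \<in> (adjrel (E-{{u2,v}}))\<^sup>*" for y
    using that
  proof (induction rule: rtrancl_induct)
    case base
    have "{v,u2} \<noteq> {u1,v}" using ne u2v by (auto simp: doubleton_eq_iff)
    moreover have "{v,u2} \<in> E" using e2 by (simp add: insert_commute)
    ultimately have "(v,u2) \<in> adjrel (E-{{u1,v}})" by simp
    then show ?case by blast
  next
    case (step y z)
    show ?case
    proof (cases "(u2,v) \<in> (adjrel (E-{{u2,v}}))\<^sup>*")
      case True then show ?thesis by simp
    next
      case False
      with step.IH have vy: "(v,y) \<in> (adjrel (E-{{u1,v}}))\<^sup>*" by simp
      show ?thesis
      proof (cases "{y,z} = {u1,v}")
        case True
        then have "(y = u1 \<and> z = v) \<or> (y = v \<and> z = u1)" by (auto simp: doubleton_eq_iff)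
        then show ?thesis using step.hyps(1) by auto
      next
        case F2: False
        then have "(y,z) \<in> adjrel (E-{{u1,v}})" using step.hyps(2) by simp
        then show ?thesis using vy by (meson rtrancl_into_rtrancl)
      qed
    qed
  qed
  have "(v,y) \<in> (adjrel (E-{{u1,v}}))\<^sup>*" using cl[OF y2] sep[OF t e2] by blast
  then have "(u1,v) \<in> (adjrel (E-{{u1,v}}))\<^sup>*" using y1 rt_sym by (meson rtrancl_trans)
  with sep[OF t e1] show False by simp
qed

theorem lemma2:
  fixes V :: "'a set" and E :: "'a set set" and \<omega> :: "'a \<Rightarrow> real" and \<gamma> :: real
  assumes "quasi_binary V E"
    and "card V > 1"
    and "\<forall>v\<in>V. deg E v \<ge> 3 \<longrightarrow> \<omega> v \<le> \<gamma>"
    and "\<forall>v\<in>V. wt \<omega> V \<ge> (3 * \<omega> v - \<gamma>) / 2"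
    and "\<forall>v\<in>V. deg E v \<ge> 2 \<longrightarrow> wt \<omega> V \<ge> 3 * \<omega> v - 2 * \<gamma>"
  shows "beta2 V E \<omega> \<ge> (wt \<omega> V - \<gamma>) / 3 \<and> alpha2 V E \<omega> \<le> (2 * wt \<omega> V + \<gamma>) / 3"
proof -
  have tr: "is_tree V E" using assms(1) unfolding quasi_binary_def by blast
  note tb = tree_basic[OF tr]
  have g: "graph V E" and fV: "finite V" and fE: "finite E" and cardE: "card E = card V - 1"
    using tb by auto
  define W where "W = wt \<omega> V"
  define th where "th = (W - \<gamma>) / 3"
  define C where "C e x = wt \<omega> (comp V (E - {e}) x)" for e x
  have compV: "comp V E' x \<subseteq> V" for E' x unfolding comp_def by blast
  have degle: "deg E v \<le> 3" if "v \<in> V" for v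
  proof -
    obtain B F f where bt: "binary_tree B F" and inj: "inj_on f V" and fB: "f ` V \<subseteq> B"
      and hom: "\<forall>u\<in>V. \<forall>w\<in>V. {u,w}\<in>E \<longrightarrow> {f u, f w}\<in>F"
      using assms(1) unfolding quasi_binary_def by blast
    obtain r where r: "r \<in> B" "deg F r = 2" "\<forall>w\<in>B. w\<noteq>r \<longrightarrow> deg F w = 1 \<or> deg F w = 3"
      using bt unfolding binary_tree_def by blast
    have gF: "graph B F" using bt unfolding binary_tree_def is_tree_def by blast
    have fvB: "f v \<in> B" using fB that by blast
    have d3: "deg F (f v) \<le> 3" using r fvB by (cases "f v = r") auto
    let ?N = "{u. {u,v} \<in> E}"
    let ?M = "{w. {w, f v} \<in> F}"
    have NV: "?N \<subseteq> V" using edge_ne[OF g] by blast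
    have "?M \<subseteq> B" using edge_ne[OF gF] by blast
    then have fM: "finite ?M" using gF unfolding graph_def using finite_subset by blast
    have "f ` ?N \<subseteq> ?M" using hom NV that by auto
    moreover have "inj_on f ?N" using inj_on_subset[OF inj NV] .
    ultimately have "card ?N \<le> card ?M" using fM card_inj_on_le by blast
    thus ?thesis using d3 unfolding deg_def by simp
  qed
  have key: "\<exists>e\<in>E. \<forall>x\<in>e. C e x \<ge> th"
  proof (rule ccontr)
    assume "\<not> ?thesis"
    then have ex: "\<forall>e\<in>E. \<exists>x. x\<in>e \<and> C e x < th" by (meson not_le)
    define tl where "tl e = (SOME x. x \<in> e \<and> C e x < th)" for e
    have tl: "tl e \<in> e \<and> C e (tl e) < th" if "e \<in> E" for e
      unfolding tl_def using someI_ex ex that by (metis (mono_tags, lifting))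
    have tlV: "tl ` E \<subseteq> V" using g tl unfolding graph_def by blast
    have "card (tl ` E) \<le> card E" by (rule card_image_le[OF fE])
    also have "\<dots> < card V" using cardE assms(2) by simp
    finally have "tl ` E \<noteq> V" by auto
    then obtain v where v: "v \<in> V" "v \<notin> tl ` E" using tlV by blast
    define N where "N = {u. {u,v}\<in>E}"
    have NV: "N \<subseteq> V" using edge_ne[OF g] unfolding N_def by blast
    have Nfin: "finite N" using NV fV finite_subset by blast
    have cardN: "card N = deg E v" unfolding N_def deg_def by simp
    have lt: "C {u,v} u < th" if "u \<in> N" for u
    proof -
      have e: "{u,v} \<in> E" using that N_def by simp
      from tl[OF e] v e have "tl {u,v} = u" by (auto simp: image_iff)
      with tl[OF e] show ?thesis by simp
    qed
    define U where "U = (\<Union>u\<in>N. comp V (E - {{u,v}}) u)"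
    have Vdec: "V = insert v U"
    proof
      show "V \<subseteq> insert v U"
      proof
        fix y assume y: "y \<in> V"
        show "y \<in> insert v U"
        proof (cases "y = v")
          case False
          then obtain u where "{u,v}\<in>E" "y \<in> comp V (E-{{u,v}}) u"
            using star_cover[OF tr v(1) y] by blast
          then show ?thesis unfolding U_def N_def by blast
        qed simp
      qed
      show "insert v U \<subseteq> V" using v compV unfolding U_def by blast
    qed
    have vnot: "v \<notin> U"
    proof
      assume "v \<in> U"
      then obtain u where "u \<in> N" "v \<in> comp V (E - {{u,v}}) u" unfolding U_def by blast
      then show False using sep[OF tr, of u v] unfolding N_def comp_def by blast
    qed
    have Ufin: "finite U" using Vdec fV by (metis finite_insert)
    have "W = \<omega> v + sum \<omega> U" unfolding W_def wt_def using Vdec Ufin vnot by simp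
    also have "sum \<omega> U = (\<Sum>u\<in>N. C {u,v} u)"
      unfolding U_def C_def wt_def
    proof (rule sum.UNION_disjoint[OF Nfin])
      show "\<forall>i\<in>N. finite (comp V (E - {{i, v}}) i)" using compV fV finite_subset by blast
      show "\<forall>i\<in>N. \<forall>j\<in>N. i \<noteq> j \<longrightarrow> comp V (E - {{i, v}}) i \<inter> comp V (E - {{j, v}}) j = {}"
        using star_disj[OF tr] unfolding N_def by blast
    qed
    finally have Weq: "W = \<omega> v + (\<Sum>u\<in>N. C {u,v} u)" .
    have Nne: "N \<noteq> {}"
    proof -
      obtain y where "y \<in> V" "y \<noteq> v"
        using assms(2) v(1) by (metis card_le_Suc0_iff_eq fV less_Suc_eq_le not_le One_nat_def)
      then show ?thesis using star_cover[OF tr v(1)] unfolding N_def by blast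
    qed
    have "(\<Sum>u\<in>N. C {u,v} u) < (\<Sum>u\<in>N. th)"
      by (rule sum_strict_mono[OF Nfin Nne lt])
    then have Wlt: "W < \<omega> v + real (card N) * th" using Weq by simp
    have c1: "card N \<ge> 1" using Nne Nfin by (simp add: Suc_le_eq card_gt_0_iff)
    have c3: "card N \<le> 3" using degle[OF v(1)] cardN by simp
    have a4: "W \<ge> (3 * \<omega> v - \<gamma>) / 2" using assms(4) v(1) W_def by blast
    consider "card N = 1" | "card N = 2" | "card N = 3" using c1 c3 by linarith
    then show False
    proof cases
      case 1
      then have "W < \<omega> v + th" using Wlt by simp
      then show False using a4 unfolding th_def by (simp add: field_simps)
    next
      case 2
      then have "W \<ge> 3 * \<omega> v - 2 * \<gamma>" using assms(5) v(1) cardN W_def by simp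
      moreover have "W < \<omega> v + 2 * th" using Wlt 2 by simp
      ultimately show False unfolding th_def by (simp add: field_simps)
    next
      case 3
      then have "\<omega> v \<le> \<gamma>" using assms(3) v(1) cardN by simp
      moreover have "W < \<omega> v + 3 * th" using Wlt 3 by simp
      ultimately show False unfolding th_def by (simp add: field_simps)
    qed
  qed
  then obtain e where e: "e \<in> E" "\<forall>x\<in>e. C e x \<ge> th" by blast
  obtain a b where ab: "e = {a,b}" "a \<noteq> b"
    using g e(1) unfolding graph_def by (metis card_2_iff)
  have "C e a + C e b = W"
  proof -
    have s1: "comp V (E-{e}) a \<union> comp V (E-{e}) b = V"
      and s2: "comp V (E-{e}) a \<inter> comp V (E-{e}) b = {}" using split[OF tr] e(1) ab by auto
    have "finite (comp V (E-{e}) a)" "finite (comp V (E-{e}) b)"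
      using compV fV finite_subset by blast+
    then show ?thesis unfolding C_def wt_def W_def
      using sum.union_disjoint s1 s2 by metis
  qed
  then have le: "C e x \<le> W - th" if "x \<in> e" for x using that e(2) ab by auto
  have fin_img: "finite ((\<lambda>x. C e x) ` e)" "(\<lambda>x. C e x) ` e \<noteq> {}" using ab by auto
  have b1: "th \<le> Min ((\<lambda>x. C e x) ` e)" using Min_ge_iff[OF fin_img] e(2) by blast
  have b2: "Min ((\<lambda>x. C e x) ` e) \<le> beta2 V E \<omega>"
    unfolding beta2_def C_def using e(1) fE by (intro Max_ge) auto
  have a1: "Max ((\<lambda>x. C e x) ` e) \<le> W - th" using Max_le_iff[OF fin_img] le by blast
  have a2: "alpha2 V E \<omega> \<le> Max ((\<lambda>x. C e x) ` e)"
    unfolding alpha2_def C_def using e(1) fE by (intro Min_le) auto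
  have f1: "(wt \<omega> V - \<gamma>) / 3 \<le> beta2 V E \<omega>" using b1 b2 unfolding th_def W_def by linarith
  have eqW: "W - th = (2 * W + \<gamma>) / 3" unfolding th_def by (simp add: field_simps)
  have f2: "alpha2 V E \<omega> \<le> (2 * wt \<omega> V + \<gamma>) / 3" using a1 a2 eqW unfolding W_def by linarith
  show ?thesis using f1 f2 by blast
qed

end
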